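(* Let $R$ be a commutative ring, $n\ge 1$, and let $\varphi$ be an invertible alternating $2n\times 2n$ matrix with entries in $R$, regarded also as a matrix over the polynomial ring $R[X]$. Then $${\rm E}_{\varphi}(R[X],(X))={\rm E}_{\varphi}(R[X])\cap {\rm GL}_{2n-1}(R[X],(X)).$$
   Context: All rings are commutative with identity. Elements of $R^{m}$ are row vectors; ${}^t$ denotes transpose. A square matrix is alternating if it has the form $\nu-\nu^t$. For an invertible alternating $2n\times 2n$ matrix $\varphi$ over a ring $S$, write $\varphi=\begin{pmatrix}0&-c\\ c^t&\nu\end{pmatrix}$, $\varphi^{-1}=\begin{pmatrix}0&d\\ -d^t&\mu\end{pmatrix}$ with $c,d\in S^{2n-1}$, and for $v\in S^{2n-1}$ set $\alpha_\varphi(v)=I_{2n-1}+d^tv\nu$, $\beta_\varphi(v)=I_{2n-1}+\mu v^tc$. ${\rm E}_\varphi(S)$ is the subgroup of ${\rm GL}_{2n-1}(S)$ generated by all $\alpha_\varphi(v),\beta_\varphi(v)$, $v\in S^{2n-1}$. For an ideal $J$ of $S$, ${\rm E}_\varphi(J)$ is the subgroup generated by $\alpha_\varphi(v),\beta_\varphi(v)$ with $v\in J^{2n-1}$, and ${\rm E}_\varphi(S,J)$ is the normal closure of ${\rm E}_\varphi(J)$ in ${\rm E}_\varphi(S)$. Here $S=R[X]$, $J=(X)$, and ${\rm GL}_{2n-1}(R[X],(X))$ is the group of invertible matrices over $R[X]$ congruent to the identity modulo $(X)$ (i.e. equal to the identity after setting $X=0$). *)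

theory Defs
  imports "Jordan_Normal_Form.Matrix" "HOL-Computational_Algebra.Polynomial"
begin

definition alternating_mat :: "'a::comm_ring_1 mat \<Rightarrow> bool" where
  "alternating_mat A \<longleftrightarrow>
     (\<exists>\<nu> \<in> carrier_mat (dim_row A) (dim_row A). A = \<nu> - transpose_mat \<nu>)"

definition inv_of_mat :: "'a::comm_ring_1 mat \<Rightarrow> 'a mat" where
  "inv_of_mat A = (SOME B. B \<in> carrier_mat (dim_row A) (dim_row A) \<and>
       A * B = 1\<^sub>m (dim_row A) \<and> B * A = 1\<^sub>m (dim_row A))"

text \<open>Block decomposition: phi = [[0, -c], [c^t, nu]], phi^-1 = [[0, d], [-d^t, mu]];
  c, d are 1 x (2n-1) row vectors, nu, mu are (2n-1) x (2n-1).\<close>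
definition blk_c :: "'a::comm_ring_1 mat \<Rightarrow> 'a mat" where
  "blk_c \<phi> = mat 1 (dim_row \<phi> - 1) (\<lambda>(i,j). - (\<phi> $$ (0, j+1)))"
definition blk_nu :: "'a::comm_ring_1 mat \<Rightarrow> 'a mat" where
  "blk_nu \<phi> = mat (dim_row \<phi> - 1) (dim_row \<phi> - 1) (\<lambda>(i,j). \<phi> $$ (i+1, j+1))"
definition blk_d :: "'a::comm_ring_1 mat \<Rightarrow> 'a mat" where
  "blk_d \<phi> = mat 1 (dim_row \<phi> - 1) (\<lambda>(i,j). inv_of_mat \<phi> $$ (0, j+1))"
definition blk_mu :: "'a::comm_ring_1 mat \<Rightarrow> 'a mat" where
  "blk_mu \<phi> = mat (dim_row \<phi> - 1) (dim_row \<phi> - 1) (\<lambda>(i,j). inv_of_mat \<phi> $$ (i+1, j+1))"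

definition alpha_phi :: "'a::comm_ring_1 mat \<Rightarrow> 'a mat \<Rightarrow> 'a mat" where
  "alpha_phi \<phi> v = 1\<^sub>m (dim_row \<phi> - 1) + transpose_mat (blk_d \<phi>) * v * blk_nu \<phi>"
definition beta_phi :: "'a::comm_ring_1 mat \<Rightarrow> 'a mat \<Rightarrow> 'a mat" where
  "beta_phi \<phi> v = 1\<^sub>m (dim_row \<phi> - 1) + blk_mu \<phi> * transpose_mat v * blk_c \<phi>"

inductive_set gen_grp :: "nat \<Rightarrow> 'a::comm_ring_1 mat set \<Rightarrow> 'a mat set"
  for m :: nat and G :: "'a mat set" where
  one: "1\<^sub>m m \<in> gen_grp m G"
| left: "g \<in> gen_grp m G \<Longrightarrow> s \<in> G \<Longrightarrow> s * g \<in> gen_grp m G"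
| left_inv: "g \<in> gen_grp m G \<Longrightarrow> s \<in> G \<Longrightarrow> t \<in> carrier_mat m m \<Longrightarrow>
     s * t = 1\<^sub>m m \<Longrightarrow> t * s = 1\<^sub>m m \<Longrightarrow> t * g \<in> gen_grp m G"

definition rowvecs :: "'a::comm_ring_1 mat \<Rightarrow> 'a set \<Rightarrow> 'a mat set" where
  "rowvecs \<phi> J = {v \<in> carrier_mat 1 (dim_row \<phi> - 1). \<forall>j < dim_row \<phi> - 1. v $$ (0, j) \<in> J}"

definition E_phi :: "'a::comm_ring_1 mat \<Rightarrow> 'a set \<Rightarrow> 'a mat set" where
  "E_phi \<phi> J = gen_grp (dim_row \<phi> - 1)
     ({alpha_phi \<phi> v | v. v \<in> rowvecs \<phi> J} \<union> {beta_phi \<phi> v | v. v \<in> rowvecs \<phi> J})"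

definition E_phi_rel :: "'a::comm_ring_1 mat \<Rightarrow> 'a set \<Rightarrow> 'a mat set" where
  "E_phi_rel \<phi> J = gen_grp (dim_row \<phi> - 1)
     {g * h * t | g h t. g \<in> E_phi \<phi> UNIV \<and> h \<in> E_phi \<phi> J \<and>
        t \<in> carrier_mat (dim_row \<phi> - 1) (dim_row \<phi> - 1) \<and>
        g * t = 1\<^sub>m (dim_row \<phi> - 1) \<and> t * g = 1\<^sub>m (dim_row \<phi> - 1)}"

definition ideal_X :: "'a::comm_ring_1 poly set" where
  "ideal_X = {p. [:0, 1:] dvd p}"

definition GL_X :: "nat \<Rightarrow> 'a::comm_ring_1 poly mat set" where
  "GL_X m = {M \<in> carrier_mat m m. invertible_mat M \<and> map_mat (\<lambda>p. poly p 0) M = 1\<^sub>m m}"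

end

theory Submission
  imports Defs
begin


lemma sq_assoc: "A \<in> carrier_mat m m \<Longrightarrow> B \<in> carrier_mat m m \<Longrightarrow> C \<in> carrier_mat m m \<Longrightarrow>
   (A * B) * C = A * (B * C)" by (rule assoc_mult_mat)
lemma sq_one_l: "(A :: 'a :: semiring_1 mat) \<in> carrier_mat m m \<Longrightarrow> 1\<^sub>m m * A = A" by (rule left_mult_one_mat)
lemma sq_one_r: "(A :: 'a :: semiring_1 mat) \<in> carrier_mat m m \<Longrightarrow> A * 1\<^sub>m m = A" by (rule right_mult_one_mat)
lemmas sqsimps = sq_assoc sq_one_l sq_one_r

lemma inv_unique_mat:
  fixes A B C :: "'a::comm_ring_1 mat"
  assumes "A \<in> carrier_mat n n" "B \<in> carrier_mat n n" "C \<in> carrier_mat n n"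
    "A * B = 1\<^sub>m n" "C * A = 1\<^sub>m n"
  shows "B = C"
proof -
  have "C = C * 1\<^sub>m n" using assms(3) by (simp add: sq_one_r)
  also have "\<dots> = C * (A * B)" using assms(4) by simp
  also have "\<dots> = (C * A) * B" by (rule sq_assoc[OF assms(3,1,2), symmetric])
  also have "\<dots> = B" using assms(2,5) by (simp add: sq_one_l)
  finally show ?thesis by (rule sym)
qed

lemma massoc: fixes A :: "'a::semiring_1 mat" shows "A \<in> carrier_mat m m \<Longrightarrow> B \<in> carrier_mat m m \<Longrightarrow> C \<in> carrier_mat m m \<Longrightarrow>
   A * (B * C) = (A * B) * C" by (simp add: sqsimps)

lemma mcancel: fixes A :: "'a::semiring_1 mat" shows "A \<in> carrier_mat m m \<Longrightarrow> B \<in> carrier_mat m m \<Longrightarrow> C \<in> carrier_mat m m \<Longrightarrow>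
   A * B = 1\<^sub>m m \<Longrightarrow> A * (B * C) = C"
  by (simp add: massoc sqsimps)

lemma gen_grp_carrier:
  assumes G: "G \<subseteq> carrier_mat m m" and g: "g \<in> gen_grp m G"
  shows "g \<in> carrier_mat m m"
  using g by induct (use G in auto)

lemma gen_grp_mult:
  assumes G: "G \<subseteq> carrier_mat m m" and g: "g \<in> gen_grp m G" and h: "h \<in> gen_grp m G"
  shows "g * h \<in> gen_grp m G"
  using g
proof induct
  case one then show ?case using gen_grp_carrier[OF G h] h by simp
next
  case (left g s)
  have "s * g * h = s * (g * h)" using gen_grp_carrier[OF G h] gen_grp_carrier[OF G left(1)] left(3) G
    by (meson assoc_mult_mat subsetD)
  then show ?case using gen_grp.left[OF left(2) left(3)] by simp
next
  case (left_inv g s t)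
  have "t * g * h = t * (g * h)" using gen_grp_carrier[OF G h] gen_grp_carrier[OF G left_inv(1)] left_inv(4)
    by (meson assoc_mult_mat subsetD)
  then show ?case using gen_grp.left_inv[OF left_inv(2) left_inv(3-6)] by simp
qed

lemma gen_grp_gen:
  assumes G: "G \<subseteq> carrier_mat m m" and s: "s \<in> G"
  shows "s \<in> gen_grp m G"
proof -
  have "s * 1\<^sub>m m \<in> gen_grp m G" by (rule gen_grp.left[OF gen_grp.one s])
  then show ?thesis using G s by auto
qed

lemma gen_grp_inv_gen:
  assumes G: "G \<subseteq> carrier_mat m m" and s: "s \<in> G" and t: "t \<in> carrier_mat m m"
    "s * t = 1\<^sub>m m" "t * s = 1\<^sub>m m"
  shows "t \<in> gen_grp m G"
proof -
  have "t * 1\<^sub>m m \<in> gen_grp m G" by (rule gen_grp.left_inv[OF gen_grp.one s t])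
  then show ?thesis using t by auto
qed

lemma gen_grp_inv:
  assumes G: "G \<subseteq> carrier_mat m m"
    and Ginv: "\<And>s. s \<in> G \<Longrightarrow> \<exists>t\<in>carrier_mat m m. s * t = 1\<^sub>m m \<and> t * s = 1\<^sub>m m"
    and g: "g \<in> gen_grp m G"
  shows "\<exists>g'\<in>gen_grp m G. g * g' = 1\<^sub>m m \<and> g' * g = 1\<^sub>m m"
  using g
proof induct
  case one then show ?case by (intro bexI[of _ "1\<^sub>m m"]) (auto intro: gen_grp.one)
next
  case (left g s)
  from left(2) obtain g' where g': "g' \<in> gen_grp m G" "g * g' = 1\<^sub>m m" "g' * g = 1\<^sub>m m" by blast
  from Ginv[OF left(3)] obtain t where t: "t \<in> carrier_mat m m" "s * t = 1\<^sub>m m" "t * s = 1\<^sub>m m" by blast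
  have tg: "t \<in> gen_grp m G" using gen_grp_inv_gen[OF G left(3) t] .
  have c: "g \<in> carrier_mat m m" "g' \<in> carrier_mat m m" "s \<in> carrier_mat m m"
    using gen_grp_carrier[OF G] g' left G by auto
  have "s * g * (g' * t) = s * (g * (g' * t))" using c t by (simp add: sqsimps)
  also have "g * (g' * t) = t" using mcancel[of g m g' t] c t g' by simp
  finally have 1: "s * g * (g' * t) = 1\<^sub>m m" using t by simp
  have "(g' * t) * (s * g) = g' * (t * (s * g))" using c t by (simp add: sqsimps)
  also have "t * (s * g) = g" using mcancel[of t m s g] c t by simp
  finally have 2: "(g' * t) * (s * g) = 1\<^sub>m m" using g' by simp
  show ?case using 1 2 gen_grp_mult[OF G g'(1) tg] by blast
next
  case (left_inv g s t)
  from left_inv(2) obtain g' where g': "g' \<in> gen_grp m G" "g * g' = 1\<^sub>m m" "g' * g = 1\<^sub>m m" by blast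
  have sg: "s \<in> gen_grp m G" using gen_grp_gen[OF G left_inv(3)] .
  have c: "g \<in> carrier_mat m m" "g' \<in> carrier_mat m m" "s \<in> carrier_mat m m" "t \<in> carrier_mat m m"
    using gen_grp_carrier[OF G] g' left_inv G by auto
  have "t * g * (g' * s) = t * (g * (g' * s))" using c by (simp add: sqsimps)
  also have "g * (g' * s) = s" using mcancel[of g m g' s] c g' by simp
  finally have 1: "t * g * (g' * s) = 1\<^sub>m m" using left_inv by simp
  have "(g' * s) * (t * g) = g' * (s * (t * g))" using c by (simp add: sqsimps)
  also have "s * (t * g) = g" using mcancel[of s m t g] c left_inv by simp
  finally have 2: "(g' * s) * (t * g) = 1\<^sub>m m" using g' by simp
  show ?case using 1 2 gen_grp_mult[OF G g'(1) sg] by blast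
qed

lemma gen_grp_sub:
  assumes G: "G \<subseteq> carrier_mat m m"
    and Ginv: "\<And>s. s \<in> G \<Longrightarrow> \<exists>t\<in>carrier_mat m m. s * t = 1\<^sub>m m \<and> t * s = 1\<^sub>m m"
    and H: "H \<subseteq> gen_grp m G" and x: "x \<in> gen_grp m H"
  shows "x \<in> gen_grp m G"
  using x
proof induct
  case one then show ?case by (rule gen_grp.one)
next
  case (left g s) then show ?case using gen_grp_mult[OF G] H by blast
next
  case (left_inv g s t)
  have sG: "s \<in> gen_grp m G" using H left_inv by blast
  from gen_grp_inv[OF G Ginv sG] obtain s' where s': "s' \<in> gen_grp m G" "s * s' = 1\<^sub>m m" "s' * s = 1\<^sub>m m" by blast
  have "t = s'" using inv_unique_mat[of s m t s'] gen_grp_carrier[OF G] sG s' left_inv by auto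
  then show ?case using gen_grp_mult[OF G s'(1) left_inv(2)] by simp
qed

lemma gen_grp_hom_one:
  fixes f :: "'a::comm_ring_1 mat \<Rightarrow> 'a mat"
  assumes G: "G \<subseteq> carrier_mat m m"
    and hom: "\<And>A B. A \<in> carrier_mat m m \<Longrightarrow> B \<in> carrier_mat m m \<Longrightarrow> f (A * B) = f A * f B"
    and f1: "f (1\<^sub>m m) = 1\<^sub>m m" and fG: "\<And>s. s \<in> G \<Longrightarrow> f s = 1\<^sub>m m"
    and fc: "\<And>A. A \<in> carrier_mat m m \<Longrightarrow> f A \<in> carrier_mat m m"
    and x: "x \<in> gen_grp m G"
  shows "f x = 1\<^sub>m m"
  using x
proof induct
  case one then show ?case by (rule f1)
next
  case (left g s)
  have "s \<in> carrier_mat m m" "g \<in> carrier_mat m m" using G left gen_grp_carrier[OF G] by auto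
  then show ?case using hom[of s g] fG[OF left(3)] left(2) by (simp add: sqsimps)
next
  case (left_inv g s t)
  have sc: "s \<in> carrier_mat m m" using G left_inv by auto
  have "f t = f s * f t" using fG[OF left_inv(3)] fc[OF left_inv(4)] by simp
  also have "\<dots> = 1\<^sub>m m" using hom[OF sc left_inv(4)] left_inv f1 by simp
  finally show ?case using hom[of t g] left_inv gen_grp_carrier[OF G] by auto
qed



lemma quad_zero:
  fixes x :: "nat \<Rightarrow> 'b::comm_ring_1"
  shows "(\<Sum>k\<in>{0..<N}. (\<Sum>l\<in>{0..<N}. x l * (\<nu> l k - \<nu> k l)) * x k) = 0"
proof -
  have "(\<Sum>k\<in>{0..<N}. (\<Sum>l\<in>{0..<N}. x l * (\<nu> l k - \<nu> k l)) * x k)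
     = (\<Sum>k\<in>{0..<N}. \<Sum>l\<in>{0..<N}. x l * \<nu> l k * x k) - (\<Sum>k\<in>{0..<N}. \<Sum>l\<in>{0..<N}. x l * \<nu> k l * x k)"
    by (simp add: sum_distrib_right sum_subtractf[symmetric] right_diff_distrib left_diff_distrib)
  also have "(\<Sum>k\<in>{0..<N}. \<Sum>l\<in>{0..<N}. x l * \<nu> k l * x k) = (\<Sum>l\<in>{0..<N}. \<Sum>k\<in>{0..<N}. x l * \<nu> k l * x k)"
    by (rule sum.swap)
  also have "\<dots> = (\<Sum>k\<in>{0..<N}. \<Sum>l\<in>{0..<N}. x l * \<nu> l k * x k)"
    by (intro sum.cong refl) (simp add: ac_simps)
  finally show ?thesis by simp
qed

locale altsetup =
  fixes A :: "'b::comm_ring_1 mat" and N :: nat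
  assumes A: "A \<in> carrier_mat N N" and alt: "alternating_mat A" and N1: "N \<ge> 1"
    and inv: "invertible_mat A"
begin

definition B where "B = inv_of_mat A"

lemma dimA[simp]: "dim_row A = N" "dim_col A = N" using A by auto

lemma B_props: "B \<in> carrier_mat N N" "A * B = 1\<^sub>m N" "B * A = 1\<^sub>m N"
proof -
  from inv obtain B0 where B0: "A * B0 = 1\<^sub>m N" "B0 * A = 1\<^sub>m (dim_row B0)"
    unfolding invertible_mat_def inverts_mat_def by auto
  have "dim_col B0 = N" using arg_cong[OF B0(1), of dim_col] by simp
  moreover have "dim_row B0 = N" using arg_cong[OF B0(2), of dim_col] by simp
  ultimately have "B0 \<in> carrier_mat N N \<and> A * B0 = 1\<^sub>m N \<and> B0 * A = 1\<^sub>m N" using B0 by auto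
  then have "\<exists>B. B \<in> carrier_mat N N \<and> A * B = 1\<^sub>m N \<and> B * A = 1\<^sub>m N" by blast
  from someI_ex[OF this] show "B \<in> carrier_mat N N" "A * B = 1\<^sub>m N" "B * A = 1\<^sub>m N"
    unfolding B_def inv_of_mat_def by auto
qed

lemma dimB[simp]: "dim_row B = N" "dim_col B = N" using B_props by auto

lemma A_nu: obtains \<nu> where "\<nu> \<in> carrier_mat N N" "\<And>i j. i < N \<Longrightarrow> j < N \<Longrightarrow> A $$ (i,j) = \<nu> $$ (i,j) - \<nu> $$ (j,i)"
proof -
  from alt obtain \<nu> where nu: "\<nu> \<in> carrier_mat N N" "A = \<nu> - transpose_mat \<nu>"
    unfolding alternating_mat_def by auto
  show ?thesis by (rule that[OF nu(1)]) (subst nu(2), use nu(1) in auto)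
qed

lemma A_anti: "i < N \<Longrightarrow> j < N \<Longrightarrow> A $$ (i,j) = - A $$ (j,i)"
proof -
  assume ij: "i < N" "j < N"
  obtain \<nu> where nu: "\<nu> \<in> carrier_mat N N" "\<And>i j. i < N \<Longrightarrow> j < N \<Longrightarrow> A $$ (i,j) = \<nu> $$ (i,j) - \<nu> $$ (j,i)"
    using A_nu by blast
  show ?thesis using nu(2)[OF ij] nu(2)[OF ij(2,1)] by simp
qed

lemma A_diag: "i < N \<Longrightarrow> A $$ (i,i) = 0"
proof -
  assume ij: "i < N"
  obtain \<nu> where nu: "\<nu> \<in> carrier_mat N N" "\<And>i j. i < N \<Longrightarrow> j < N \<Longrightarrow> A $$ (i,j) = \<nu> $$ (i,j) - \<nu> $$ (j,i)"
    using A_nu by blast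
  show ?thesis using nu(2)[OF ij ij] by simp
qed

lemma B_anti: "i < N \<Longrightarrow> j < N \<Longrightarrow> B $$ (i,j) = - B $$ (j,i)"
proof -
  assume ij: "i < N" "j < N"
  have tA: "transpose_mat A = - A"
  proof (rule eq_matI)
    fix i j assume "i < dim_row (- A)" "j < dim_col (- A)"
    then have "i < N" "j < N" by auto
    then show "transpose_mat A $$ (i, j) = (- A) $$ (i, j)" using A_anti[of j i] by simp
  qed auto
  have "transpose_mat (A * B) = transpose_mat B * transpose_mat A"
    using A B_props by (intro transpose_mult) auto
  then have "transpose_mat B * (- A) = 1\<^sub>m N" using B_props tA by simp
  then have "(- transpose_mat B) * A = 1\<^sub>m N" by simp
  then have "B = - transpose_mat B"
    using inv_unique_mat[of A N B "- transpose_mat B"] A B_props by auto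
  then have "B $$ (i,j) = (- transpose_mat B) $$ (i,j)" by simp
  then show ?thesis using ij by simp
qed

lemma B00: "B $$ (0,0) = 0"
proof -
  obtain \<nu> where nu: "\<nu> \<in> carrier_mat N N" "\<And>i j. i < N \<Longrightarrow> j < N \<Longrightarrow> A $$ (i,j) = \<nu> $$ (i,j) - \<nu> $$ (j,i)"
    using A_nu by blast
  have "B * A * B = B" using B_props by simp
  then have "B $$ (0,0) = (B * A * B) $$ (0,0)" by simp
  also have "\<dots> = (\<Sum>k\<in>{0..<N}. (\<Sum>l\<in>{0..<N}. B$$(0,l) * A$$(l,k)) * B$$(k,0))"
    using N1 by (auto simp: scalar_prod_def intro!: sum.cong)
  also have "\<dots> = - (\<Sum>k\<in>{0..<N}. (\<Sum>l\<in>{0..<N}. B$$(0,l) * (\<nu>$$(l,k) - \<nu>$$(k,l))) * B$$(0,k))"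
  proof -
    have "\<And>k. k \<in> {0..<N} \<Longrightarrow> (\<Sum>l\<in>{0..<N}. B$$(0,l) * A$$(l,k)) * B$$(k,0) =
       - ((\<Sum>l\<in>{0..<N}. B$$(0,l) * (\<nu>$$(l,k) - \<nu>$$(k,l))) * B$$(0,k))"
    proof -
      fix k assume k: "k \<in> {0..<N}"
      have "B$$(k,0) = - B$$(0,k)" using B_anti[of k 0] k N1 by auto
      moreover have "(\<Sum>l\<in>{0..<N}. B$$(0,l) * A$$(l,k)) = (\<Sum>l\<in>{0..<N}. B$$(0,l) * (\<nu>$$(l,k) - \<nu>$$(k,l)))"
        using k by (intro sum.cong) (auto simp: nu(2))
      ultimately show "?thesis k" by simp
    qed
    then show ?thesis by (simp add: sum_negf[symmetric])
  qed
  also have "\<dots> = 0" using quad_zero[of "\<lambda>l. B$$(0,l)" "\<lambda>l k. \<nu>$$(l,k)" N] by simp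
  finally show ?thesis .
qed

lemma Binv: "inv_of_mat A = B" unfolding B_def ..

abbreviation "Dt \<equiv> transpose_mat (blk_d A)"
abbreviation "Nu \<equiv> blk_nu A"
abbreviation "Mu \<equiv> blk_mu A"
abbreviation "Cc \<equiv> blk_c A"

lemma blk_carr: "Dt \<in> carrier_mat (N-1) 1" "Nu \<in> carrier_mat (N-1) (N-1)"
  "Mu \<in> carrier_mat (N-1) (N-1)" "Cc \<in> carrier_mat 1 (N-1)"
  by (auto simp: blk_d_def blk_nu_def blk_mu_def blk_c_def)

lemma sum_shift0: "N \<ge> 1 \<Longrightarrow> (\<Sum>k\<in>{0..<N}. f k) = f 0 + (\<Sum>k\<in>{0..<N-1}. f (Suc k))"
  by (cases N) (auto simp: sum.atLeast0_lessThan_Suc_shift simp del: sum.op_ivl_Suc)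

lemma NuD: "Nu * Dt = 0\<^sub>m (N-1) 1"
proof (rule eq_matI)
  fix i j assume "i < dim_row (0\<^sub>m (N - 1) 1 :: 'b mat)" "j < dim_col (0\<^sub>m (N - 1) 1 :: 'b mat)"
  then have i: "i < N - 1" and j: "j = 0" by auto
  have "(A * B) $$ (Suc i, 0) = 0" using B_props i by simp
  then have "(\<Sum>k\<in>{0..<N}. A $$ (Suc i, k) * B $$ (k, 0)) = 0"
    using i by (simp add: scalar_prod_def)
  then have "A $$ (Suc i, 0) * B $$ (0,0) + (\<Sum>k\<in>{0..<N-1}. A $$ (Suc i, Suc k) * B $$ (Suc k, 0)) = 0"
    by (subst (asm) sum_shift0[OF N1]) simp
  then have "(\<Sum>k\<in>{0..<N-1}. A $$ (Suc i, Suc k) * (- B $$ (0, Suc k))) = 0"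
  proof -
    assume h: "A $$ (Suc i, 0) * B $$ (0,0) + (\<Sum>k\<in>{0..<N-1}. A $$ (Suc i, Suc k) * B $$ (Suc k, 0)) = 0"
    have "(\<Sum>k\<in>{0..<N-1}. A $$ (Suc i, Suc k) * B $$ (Suc k, 0)) = (\<Sum>k\<in>{0..<N-1}. A $$ (Suc i, Suc k) * (- B $$ (0, Suc k)))"
    proof (rule sum.cong[OF refl])
      fix k assume "k \<in> {0..<N-1}"
      then have "Suc k < N" by auto
      then show "A $$ (Suc i, Suc k) * B $$ (Suc k, 0) = A $$ (Suc i, Suc k) * (- B $$ (0, Suc k))"
        using B_anti[of "Suc k" 0] N1 by simp
    qed
    then show ?thesis using h B00 by simp
  qed
  then have "(\<Sum>k\<in>{0..<N-1}. A $$ (Suc i, Suc k) * B $$ (0, Suc k)) = 0"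
    by (simp add: sum_negf)
  then show "(Nu * Dt) $$ (i, j) = 0\<^sub>m (N - 1) 1 $$ (i, j)"
    using i j by (simp add: scalar_prod_def blk_nu_def blk_d_def Binv)
qed (auto simp: blk_nu_def blk_d_def)

lemma CMu: "Cc * Mu = 0\<^sub>m 1 (N-1)"
proof (rule eq_matI)
  fix i j assume "i < dim_row (0\<^sub>m 1 (N - 1) :: 'b mat)" "j < dim_col (0\<^sub>m 1 (N - 1) :: 'b mat)"
  then have j: "j < N - 1" and i: "i = 0" by auto
  have "(A * B) $$ (0, Suc j) = 0" using B_props j by simp
  then have "(\<Sum>k\<in>{0..<N}. A $$ (0, k) * B $$ (k, Suc j)) = 0"
    using j by (simp add: scalar_prod_def)
  then have "A $$ (0, 0) * B $$ (0, Suc j) + (\<Sum>k\<in>{0..<N-1}. A $$ (0, Suc k) * B $$ (Suc k, Suc j)) = 0"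
    by (subst (asm) sum_shift0[OF N1]) simp
  then have "(\<Sum>k\<in>{0..<N-1}. A $$ (0, Suc k) * B $$ (Suc k, Suc j)) = 0"
    using A_diag[of 0] N1 by simp
  then have "(\<Sum>k\<in>{0..<N-1}. - A $$ (0, Suc k) * B $$ (Suc k, Suc j)) = 0"
    by (simp add: sum_negf)
  then show "(Cc * Mu) $$ (i, j) = 0\<^sub>m 1 (N - 1) $$ (i, j)"
    using i j by (simp add: scalar_prod_def blk_c_def blk_mu_def Binv)
qed (auto simp: blk_c_def blk_mu_def)

lemma alpha_add:
  assumes v: "v \<in> carrier_mat 1 (N-1)" and w: "w \<in> carrier_mat 1 (N-1)"
  shows "alpha_phi A v * alpha_phi A w = alpha_phi A (v + w)"
proof -
  let ?m = "N - 1"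
  define X where "X = Dt * v * Nu"
  define Y where "Y = Dt * w * Nu"
  note c = blk_carr
  have Xc: "X \<in> carrier_mat ?m ?m" "Y \<in> carrier_mat ?m ?m" using c v w unfolding X_def Y_def by auto
  have XY: "X * Y = 0\<^sub>m ?m ?m"
  proof -
    have P: "Dt * v \<in> carrier_mat ?m ?m" "Dt * w \<in> carrier_mat ?m ?m" using c v w by auto
    have "X * Y = (Dt * v) * (Nu * ((Dt * w) * Nu))"
      unfolding X_def Y_def by (rule assoc_mult_mat[OF P(1) c(2)]) (use P c in auto)
    also have "Nu * ((Dt * w) * Nu) = (Nu * (Dt * w)) * Nu"
      by (rule assoc_mult_mat[OF c(2) P(2) c(2), symmetric])
    also have "Nu * (Dt * w) = (Nu * Dt) * w"
      by (rule assoc_mult_mat[OF c(2) c(1) w, symmetric])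
    also have "\<dots> = 0\<^sub>m ?m ?m" using NuD c w by simp
    finally show ?thesis using c v by simp
  qed
  have XpY: "X + Y = Dt * (v + w) * Nu"
    unfolding X_def Y_def using c v w by (simp add: mult_add_distrib_mat[of _ ?m 1] add_mult_distrib_mat[of _ ?m ?m])
  have "alpha_phi A v * alpha_phi A w = (1\<^sub>m ?m + X) * (1\<^sub>m ?m + Y)"
    unfolding alpha_phi_def X_def Y_def by simp
  also have "\<dots> = (1\<^sub>m ?m + Y) + (X + X * Y)"
  proof -
    have "(1\<^sub>m ?m + X) * (1\<^sub>m ?m + Y) = 1\<^sub>m ?m * (1\<^sub>m ?m + Y) + X * (1\<^sub>m ?m + Y)"
      by (rule add_mult_distrib_mat) (use Xc in auto)
    also have "X * (1\<^sub>m ?m + Y) = X * 1\<^sub>m ?m + X * Y"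
      by (rule mult_add_distrib_mat) (use Xc in auto)
    finally show ?thesis using Xc by simp
  qed
  also have "\<dots> = 1\<^sub>m ?m + (X + Y)" unfolding XY by (rule eq_matI) (use Xc in auto)
  also have "\<dots> = alpha_phi A (v + w)" unfolding alpha_phi_def XpY by simp
  finally show ?thesis .
qed

lemma beta_add:
  assumes v: "v \<in> carrier_mat 1 (N-1)" and w: "w \<in> carrier_mat 1 (N-1)"
  shows "beta_phi A v * beta_phi A w = beta_phi A (v + w)"
proof -
  let ?m = "N - 1"
  define X where "X = Mu * transpose_mat v * Cc"
  define Y where "Y = Mu * transpose_mat w * Cc"
  note c = blk_carr
  have vt: "transpose_mat v \<in> carrier_mat ?m 1" "transpose_mat w \<in> carrier_mat ?m 1" using v w by auto
  have Xc: "X \<in> carrier_mat ?m ?m" "Y \<in> carrier_mat ?m ?m" using c vt unfolding X_def Y_def by auto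
  have XY: "X * Y = 0\<^sub>m ?m ?m"
  proof -
    have P: "Mu * transpose_mat v \<in> carrier_mat ?m 1" "Mu * transpose_mat w \<in> carrier_mat ?m 1" using c vt by auto
    have Q: "(Mu * transpose_mat w) * Cc \<in> carrier_mat ?m ?m" using P c by auto
    have "X * Y = (Mu * transpose_mat v) * (Cc * ((Mu * transpose_mat w) * Cc))"
      unfolding X_def Y_def by (rule assoc_mult_mat[OF P(1) c(4) Q])
    also have "Cc * ((Mu * transpose_mat w) * Cc) = (Cc * (Mu * transpose_mat w)) * Cc"
      by (rule assoc_mult_mat[OF c(4) P(2) c(4), symmetric])
    also have "Cc * (Mu * transpose_mat w) = (Cc * Mu) * transpose_mat w"
      by (rule assoc_mult_mat[OF c(4) c(3) vt(2), symmetric])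
    also have "\<dots> = 0\<^sub>m 1 1" unfolding CMu
      by (simp only: left_mult_zero_mat[OF vt(2), of 1])
    finally show ?thesis using c vt by simp
  qed
  have XpY: "X + Y = Mu * transpose_mat (v + w) * Cc"
    unfolding X_def Y_def using c vt v w
    by (simp add: transpose_add[OF v w] mult_add_distrib_mat[of _ ?m ?m] add_mult_distrib_mat[of _ ?m 1])
  have "beta_phi A v * beta_phi A w = (1\<^sub>m ?m + X) * (1\<^sub>m ?m + Y)"
    unfolding beta_phi_def X_def Y_def by simp
  also have "\<dots> = (1\<^sub>m ?m + Y) + (X + X * Y)"
  proof -
    have "(1\<^sub>m ?m + X) * (1\<^sub>m ?m + Y) = 1\<^sub>m ?m * (1\<^sub>m ?m + Y) + X * (1\<^sub>m ?m + Y)"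
      by (rule add_mult_distrib_mat) (use Xc in auto)
    also have "X * (1\<^sub>m ?m + Y) = X * 1\<^sub>m ?m + X * Y"
      by (rule mult_add_distrib_mat) (use Xc in auto)
    finally show ?thesis using Xc by simp
  qed
  also have "\<dots> = 1\<^sub>m ?m + (X + Y)" unfolding XY by (rule eq_matI) (use Xc in auto)
  also have "\<dots> = beta_phi A (v + w)" unfolding beta_phi_def XpY by simp
  finally show ?thesis .
qed

end


lemma (in semiring_hom) mat_hom_add':
  "P \<in> carrier_mat nr nc \<Longrightarrow> Q \<in> carrier_mat nr nc \<Longrightarrow> mat\<^sub>h (P + Q) = mat\<^sub>h P + mat\<^sub>h Q"
  by (rule eq_matI) (auto simp: hom_add)

definition c0 :: "'a::comm_ring_1 poly \<Rightarrow> 'a poly" where "c0 p = [:poly p 0:]"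

lemma c0_hom: "comm_ring_hom (c0 :: 'a::comm_ring_1 poly \<Rightarrow> 'a poly)"
  by unfold_locales (auto simp: c0_def)

interpretation c0: comm_ring_hom "c0 :: 'a::comm_ring_1 poly \<Rightarrow> 'a poly"
  by (rule c0_hom)

lemma sq_mult_carr: "A \<in> carrier_mat m m \<Longrightarrow> B \<in> carrier_mat m m \<Longrightarrow> A * B \<in> carrier_mat m m"
  by auto

locale polysetup = altsetup A N for A :: "'a::comm_ring_1 poly mat" and N +
  assumes const: "\<And>i j. i < N \<Longrightarrow> j < N \<Longrightarrow> c0 (A $$ (i,j)) = A $$ (i,j)"
begin

lemma L0_A: "map_mat c0 A = A"
  by (rule eq_matI) (auto simp: const)

lemma L0_B: "map_mat c0 B = B"
proof -
  have "A * map_mat c0 B = map_mat c0 A * map_mat c0 B" by (simp add: L0_A)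
  also have "\<dots> = map_mat c0 (A * B)" by (rule c0.mat_hom_mult[OF A B_props(1), symmetric])
  also have "\<dots> = 1\<^sub>m N" using B_props by (simp add: c0.mat_hom_one)
  finally have "A * map_mat c0 B = 1\<^sub>m N" .
  then show ?thesis using inv_unique_mat[of A N "map_mat c0 B" B] A B_props by auto
qed

lemma B_const: "i < N \<Longrightarrow> j < N \<Longrightarrow> c0 (B $$ (i,j)) = B $$ (i,j)"
  using arg_cong[OF L0_B, of "\<lambda>M. M $$ (i,j)"] by simp

lemma L0_blk: "map_mat c0 Dt = Dt" "map_mat c0 Nu = Nu" "map_mat c0 Mu = Mu" "map_mat c0 Cc = Cc"
  by (rule eq_matI; auto simp: blk_d_def blk_nu_def blk_mu_def blk_c_def Binv B_const const c0.hom_uminus)+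

lemma alpha_carr: "v \<in> carrier_mat 1 (N-1) \<Longrightarrow> alpha_phi A v \<in> carrier_mat (N-1) (N-1)"
  using blk_carr by (auto simp: alpha_phi_def)

lemma beta_carr: "v \<in> carrier_mat 1 (N-1) \<Longrightarrow> beta_phi A v \<in> carrier_mat (N-1) (N-1)"
  using blk_carr by (auto simp: beta_phi_def)

lemma L0_alpha: assumes v: "v \<in> carrier_mat 1 (N-1)"
  shows "map_mat c0 (alpha_phi A v) = alpha_phi A (map_mat c0 v)"
proof -
  have X: "Dt * v * Nu \<in> carrier_mat (N-1) (N-1)" using blk_carr v by auto
  have "map_mat c0 (alpha_phi A v) = 1\<^sub>m (N-1) + map_mat c0 (Dt * v * Nu)"
    unfolding alpha_phi_def using X by (simp add: c0.mat_hom_add'[of _ "N-1" "N-1"] c0.mat_hom_one)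
  also have "map_mat c0 (Dt * v * Nu) = map_mat c0 Dt * map_mat c0 v * map_mat c0 Nu"
  proof -
    have DV: "Dt * v \<in> carrier_mat (N-1) (N-1)" using blk_carr v by auto
    show ?thesis by (simp only: c0.mat_hom_mult[OF DV blk_carr(2)] c0.mat_hom_mult[OF blk_carr(1) v])
  qed
  finally show ?thesis unfolding alpha_phi_def L0_blk by simp
qed

lemma L0_beta: assumes v: "v \<in> carrier_mat 1 (N-1)"
  shows "map_mat c0 (beta_phi A v) = beta_phi A (map_mat c0 v)"
proof -
  have vt: "transpose_mat v \<in> carrier_mat (N-1) 1" using v by auto
  have X: "Mu * transpose_mat v * Cc \<in> carrier_mat (N-1) (N-1)" using blk_carr vt by auto
  have "map_mat c0 (beta_phi A v) = 1\<^sub>m (N-1) + map_mat c0 (Mu * transpose_mat v * Cc)"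
    unfolding beta_phi_def using X by (simp add: c0.mat_hom_add'[of _ "N-1" "N-1"] c0.mat_hom_one)
  also have "map_mat c0 (Mu * transpose_mat v * Cc) = map_mat c0 Mu * map_mat c0 (transpose_mat v) * map_mat c0 Cc"
  proof -
    have DV: "Mu * transpose_mat v \<in> carrier_mat (N-1) 1" using blk_carr vt by auto
    show ?thesis by (simp only: c0.mat_hom_mult[OF DV blk_carr(4)] c0.mat_hom_mult[OF blk_carr(3) vt])
  qed
  finally show ?thesis unfolding beta_phi_def L0_blk map_mat_transpose by simp
qed

lemma alpha_zero: "alpha_phi A (0\<^sub>m 1 (N-1)) = 1\<^sub>m (N-1)"
  unfolding alpha_phi_def using blk_carr by simp

lemma beta_zero: "beta_phi A (0\<^sub>m 1 (N-1)) = 1\<^sub>m (N-1)"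
proof -
  have "transpose_mat (0\<^sub>m 1 (N-1)) = (0\<^sub>m (N-1) 1 :: 'a poly mat)" by (rule eq_matI) auto
  then show ?thesis unfolding beta_phi_def using blk_carr by simp
qed

lemma vneg: fixes v :: "'a poly mat" assumes v: "v \<in> carrier_mat 1 (N-1)"
  shows "v + - v = 0\<^sub>m 1 (N-1)" "- v + v = 0\<^sub>m 1 (N-1)"
proof -
  have d: "dim_row v = 1" "dim_col v = N-1" using v by auto
  show "v + - v = 0\<^sub>m 1 (N-1)" by (rule eq_matI) (auto simp: d)
  show "- v + v = 0\<^sub>m 1 (N-1)" by (rule uminus_l_inv_mat[OF v])
qed

lemma alpha_inv: "v \<in> carrier_mat 1 (N-1) \<Longrightarrow>
  alpha_phi A v * alpha_phi A (- v) = 1\<^sub>m (N-1) \<and> alpha_phi A (- v) * alpha_phi A v = 1\<^sub>m (N-1)"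
proof -
  assume v: "v \<in> carrier_mat 1 (N-1)"
  then have v': "- v \<in> carrier_mat 1 (N-1)" by auto
  show ?thesis using alpha_add[OF v v', unfolded vneg(1)[OF v] alpha_zero] alpha_add[OF v' v, unfolded vneg(2)[OF v] alpha_zero] by blast
qed

lemma beta_inv: "v \<in> carrier_mat 1 (N-1) \<Longrightarrow>
  beta_phi A v * beta_phi A (- v) = 1\<^sub>m (N-1) \<and> beta_phi A (- v) * beta_phi A v = 1\<^sub>m (N-1)"
proof -
  assume v: "v \<in> carrier_mat 1 (N-1)"
  then have v': "- v \<in> carrier_mat 1 (N-1)" by auto
  show ?thesis using beta_add[OF v v', unfolded vneg(1)[OF v] beta_zero] beta_add[OF v' v, unfolded vneg(2)[OF v] beta_zero] by blast
qed

definition GS where "GS J = {alpha_phi A v | v. v \<in> rowvecs A J} \<union> {beta_phi A v | v. v \<in> rowvecs A J}"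

definition RG where "RG = {g * h * t | g h t. g \<in> E_phi A UNIV \<and> h \<in> E_phi A ideal_X \<and>
   t \<in> carrier_mat (N-1) (N-1) \<and> g * t = 1\<^sub>m (N-1) \<and> t * g = 1\<^sub>m (N-1)}"

lemma E_phi_eq: "E_phi A J = gen_grp (N-1) (GS J)" unfolding E_phi_def GS_def by simp

lemma Erel_eq: "E_phi_rel A ideal_X = gen_grp (N-1) RG" unfolding E_phi_rel_def RG_def by simp

lemma rowvecs_sub: "rowvecs A J \<subseteq> carrier_mat 1 (N-1)" unfolding rowvecs_def by auto

lemma rowvecs_UNIV: "rowvecs A UNIV = carrier_mat 1 (N-1)" unfolding rowvecs_def by auto

lemma GS_carr: "GS J \<subseteq> carrier_mat (N-1) (N-1)"
  unfolding GS_def using rowvecs_sub alpha_carr beta_carr by blast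

lemma GS_mono: "GS ideal_X \<subseteq> GS UNIV"
  unfolding GS_def rowvecs_UNIV using rowvecs_sub by blast

lemma GS_inv: "s \<in> GS J \<Longrightarrow> \<exists>t\<in>carrier_mat (N-1) (N-1). s * t = 1\<^sub>m (N-1) \<and> t * s = 1\<^sub>m (N-1)"
proof -
  assume "s \<in> GS J"
  then consider v where "v \<in> carrier_mat 1 (N-1)" "s = alpha_phi A v"
    | v where "v \<in> carrier_mat 1 (N-1)" "s = beta_phi A v"
    unfolding GS_def using rowvecs_sub by blast
  then show ?thesis
  proof cases
    case 1
    have v': "- v \<in> carrier_mat 1 (N-1)" using 1 by auto
    show ?thesis using alpha_inv[OF 1(1)] alpha_carr[OF v'] 1 by blast
  next
    case 2
    have v': "- v \<in> carrier_mat 1 (N-1)" using 2 by auto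
    show ?thesis using beta_inv[OF 2(1)] beta_carr[OF v'] 2 by blast
  qed
qed

lemma GS_inv_in:
  assumes s: "s \<in> GS UNIV" and t: "t \<in> carrier_mat (N-1) (N-1)" "s * t = 1\<^sub>m (N-1)" "t * s = 1\<^sub>m (N-1)"
  shows "t \<in> GS UNIV"
proof -
  from s consider v where "v \<in> carrier_mat 1 (N-1)" "s = alpha_phi A v"
    | v where "v \<in> carrier_mat 1 (N-1)" "s = beta_phi A v"
    unfolding GS_def rowvecs_UNIV by blast
  then show ?thesis
  proof cases
    case 1
    have v': "- v \<in> carrier_mat 1 (N-1)" using 1 by auto
    have "alpha_phi A (- v) = t"
      using inv_unique_mat[of s "N-1" "alpha_phi A (- v)" t] alpha_inv[OF 1(1)] 1 t alpha_carr[OF v'] alpha_carr[OF 1(1)] by auto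
    then show ?thesis using v' unfolding GS_def rowvecs_UNIV by blast
  next
    case 2
    have v': "- v \<in> carrier_mat 1 (N-1)" using 2 by auto
    have "beta_phi A (- v) = t"
      using inv_unique_mat[of s "N-1" "beta_phi A (- v)" t] beta_inv[OF 2(1)] 2 t beta_carr[OF v'] beta_carr[OF 2(1)] by auto
    then show ?thesis using v' unfolding GS_def rowvecs_UNIV by blast
  qed
qed

lemma E_carr: "g \<in> E_phi A J \<Longrightarrow> g \<in> carrier_mat (N-1) (N-1)"
  unfolding E_phi_eq using gen_grp_carrier[OF GS_carr] .

lemma E_mult: "g \<in> E_phi A J \<Longrightarrow> h \<in> E_phi A J \<Longrightarrow> g * h \<in> E_phi A J"
  unfolding E_phi_eq using gen_grp_mult[OF GS_carr] .

lemma E_inv: "g \<in> E_phi A J \<Longrightarrow> \<exists>g'\<in>E_phi A J. g * g' = 1\<^sub>m (N-1) \<and> g' * g = 1\<^sub>m (N-1)"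
  unfolding E_phi_eq using gen_grp_inv[OF GS_carr[of J] GS_inv[of _ J]] by blast

lemma E_gen: "s \<in> GS J \<Longrightarrow> s \<in> E_phi A J"
  unfolding E_phi_eq using gen_grp_gen[OF GS_carr] .

lemma EJ_sub: "E_phi A ideal_X \<subseteq> E_phi A UNIV"
proof
  fix x assume "x \<in> E_phi A ideal_X"
  then have "x \<in> gen_grp (N-1) (GS ideal_X)" unfolding E_phi_eq .
  moreover have "GS ideal_X \<subseteq> gen_grp (N-1) (GS UNIV)"
    using GS_mono E_gen[of _ UNIV] unfolding E_phi_eq by blast
  ultimately show "x \<in> E_phi A UNIV" unfolding E_phi_eq using gen_grp_sub[OF GS_carr[of UNIV] GS_inv[of _ UNIV]] by blast
qed

lemma RG_carr: "RG \<subseteq> carrier_mat (N-1) (N-1)"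
proof
  fix r assume "r \<in> RG"
  then obtain g h t where r: "r = g * h * t" "g \<in> E_phi A UNIV" "h \<in> E_phi A ideal_X"
    "t \<in> carrier_mat (N-1) (N-1)" unfolding RG_def by blast
  have "g \<in> carrier_mat (N-1) (N-1)" "h \<in> carrier_mat (N-1) (N-1)" using r(2,3) E_carr by auto
  then show "r \<in> carrier_mat (N-1) (N-1)" using r(1,4) by (simp add: sq_mult_carr)
qed

lemma RG_ES: "RG \<subseteq> E_phi A UNIV"
proof
  fix r assume "r \<in> RG"
  then obtain g h t where r: "r = g * h * t" "g \<in> E_phi A UNIV" "h \<in> E_phi A ideal_X"
    "t \<in> carrier_mat (N-1) (N-1)" "g * t = 1\<^sub>m (N-1)" "t * g = 1\<^sub>m (N-1)" unfolding RG_def by blast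
  obtain g' where g': "g' \<in> E_phi A UNIV" "g * g' = 1\<^sub>m (N-1)" "g' * g = 1\<^sub>m (N-1)" using E_inv[OF r(2)] by blast
  have "t = g'" using inv_unique_mat[of g "N-1" t g'] r g' E_carr by blast
  have "h \<in> E_phi A UNIV" using r(3) EJ_sub by blast
  then have "g * h \<in> E_phi A UNIV" using E_mult r(2) by blast
  then show "r \<in> E_phi A UNIV" using E_mult[OF _ g'(1)] \<open>t = g'\<close> r(1) by blast
qed

lemma Erel_ES: "E_phi_rel A ideal_X \<subseteq> E_phi A UNIV"
  using gen_grp_sub[OF GS_carr[of UNIV] GS_inv[of _ UNIV] RG_ES[unfolded E_phi_eq]] unfolding Erel_eq E_phi_eq by blast

lemma Erel_carr: "x \<in> E_phi_rel A ideal_X \<Longrightarrow> x \<in> carrier_mat (N-1) (N-1)"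
  using Erel_ES E_carr by blast

lemma Erel_mult: "x \<in> E_phi_rel A ideal_X \<Longrightarrow> y \<in> E_phi_rel A ideal_X \<Longrightarrow> x * y \<in> E_phi_rel A ideal_X"
  unfolding Erel_eq using gen_grp_mult[OF RG_carr] .

lemma L0_mult: "P \<in> carrier_mat (N-1) (N-1) \<Longrightarrow> Q \<in> carrier_mat (N-1) (N-1) \<Longrightarrow>
   map_mat c0 (P * Q) = map_mat c0 P * map_mat c0 Q"
  by (rule c0.mat_hom_mult)

lemma L0_GJ: assumes s: "s \<in> GS ideal_X" shows "map_mat c0 s = 1\<^sub>m (N-1)"
proof -
  have z: "map_mat c0 v = 0\<^sub>m 1 (N-1)" if v: "v \<in> rowvecs A ideal_X" for v
  proof (rule eq_matI)
    fix i j assume ij: "i < dim_row (0\<^sub>m 1 (N - 1) :: 'a poly mat)" "j < dim_col (0\<^sub>m 1 (N - 1) :: 'a poly mat)"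
    then have "v $$ (0, j) \<in> ideal_X" using v unfolding rowvecs_def by auto
    then have "poly (v $$ (0, j)) 0 = 0" unfolding ideal_X_def using dvd_iff_poly_eq_0[of 0] by auto
    then show "map_mat c0 v $$ (i, j) = 0\<^sub>m 1 (N - 1) $$ (i, j)" using ij v unfolding rowvecs_def
      by (auto simp: c0_def)
  qed (use v in \<open>auto simp: rowvecs_def\<close>)
  from s consider v where "v \<in> rowvecs A ideal_X" "s = alpha_phi A v"
    | v where "v \<in> rowvecs A ideal_X" "s = beta_phi A v"
    unfolding GS_def by blast
  then show ?thesis
  proof cases
    case 1 then show ?thesis using L0_alpha[of v] rowvecs_sub z alpha_zero by auto
  next
    case 2 then show ?thesis using L0_beta[of v] rowvecs_sub z beta_zero by auto
  qed
qed

lemma L0_EJ: "h \<in> E_phi A ideal_X \<Longrightarrow> map_mat c0 h = 1\<^sub>m (N-1)"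
  unfolding E_phi_eq
  by (rule gen_grp_hom_one[OF GS_carr L0_mult c0.mat_hom_one L0_GJ]) auto

lemma L0_RG: assumes r: "r \<in> RG" shows "map_mat c0 r = 1\<^sub>m (N-1)"
proof -
  obtain g h t where r: "r = g * h * t" "g \<in> E_phi A UNIV" "h \<in> E_phi A ideal_X"
    "t \<in> carrier_mat (N-1) (N-1)" "g * t = 1\<^sub>m (N-1)" "t * g = 1\<^sub>m (N-1)" using r unfolding RG_def by blast
  have c: "g \<in> carrier_mat (N-1) (N-1)" "h \<in> carrier_mat (N-1) (N-1)" using r E_carr by auto
  have "map_mat c0 r = map_mat c0 g * map_mat c0 h * map_mat c0 t"
    using r c by (simp add: L0_mult)
  also have "\<dots> = map_mat c0 g * map_mat c0 t" using L0_EJ[OF r(3)] c by simp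
  also have "\<dots> = map_mat c0 (g * t)" by (rule L0_mult[symmetric]) (use c r in auto)
  also have "\<dots> = 1\<^sub>m (N-1)" using r c0.mat_hom_one by simp
  finally show ?thesis .
qed

lemma L0_Erel: "x \<in> E_phi_rel A ideal_X \<Longrightarrow> map_mat c0 x = 1\<^sub>m (N-1)"
  unfolding Erel_eq
  by (rule gen_grp_hom_one[OF RG_carr L0_mult c0.mat_hom_one L0_RG]) auto

end


context polysetup
begin

lemma conj_RG:
  assumes x: "x \<in> GS UNIV" and xi: "xi \<in> carrier_mat (N-1) (N-1)" "x * xi = 1\<^sub>m (N-1)" "xi * x = 1\<^sub>m (N-1)"
    and r: "r \<in> RG"
  shows "x * r * xi \<in> RG"
proof -
  obtain g h t where r: "r = g * h * t" "g \<in> E_phi A UNIV" "h \<in> E_phi A ideal_X"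
    "t \<in> carrier_mat (N-1) (N-1)" "g * t = 1\<^sub>m (N-1)" "t * g = 1\<^sub>m (N-1)" using r unfolding RG_def by blast
  have xc: "x \<in> carrier_mat (N-1) (N-1)" using x GS_carr by blast
  have c: "g \<in> carrier_mat (N-1) (N-1)" "h \<in> carrier_mat (N-1) (N-1)" using r(2,3) E_carr by auto
  have xg: "x * g \<in> E_phi A UNIV" using E_mult[OF E_gen[OF x] r(2)] .
  have txi: "t * xi \<in> carrier_mat (N-1) (N-1)" using r(4) xi by (simp add: sq_mult_carr)
  have "(x * g) * (t * xi) = x * (g * (t * xi))" using xc c r xi by (simp add: sqsimps sq_mult_carr)
  also have "g * (t * xi) = xi" using mcancel[OF c(1) r(4) xi(1) r(5)] .
  finally have e1: "(x * g) * (t * xi) = 1\<^sub>m (N-1)" using xi by simp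
  have "(t * xi) * (x * g) = t * (xi * (x * g))" using xc c r xi by (simp add: sqsimps sq_mult_carr)
  also have "xi * (x * g) = g" using mcancel[OF xi(1) xc c(1) xi(3)] .
  finally have e2: "(t * xi) * (x * g) = 1\<^sub>m (N-1)" using r by simp
  have "x * r * xi = (x * g) * h * (t * xi)" using xc c r xi by (simp add: sqsimps sq_mult_carr)
  then show ?thesis unfolding RG_def using xg r(3) txi e1 e2 by blast
qed

lemma conj_Erel:
  assumes x: "x \<in> GS UNIV" and xi: "xi \<in> carrier_mat (N-1) (N-1)" "x * xi = 1\<^sub>m (N-1)" "xi * x = 1\<^sub>m (N-1)"
    and y: "y \<in> E_phi_rel A ideal_X"
  shows "x * y * xi \<in> E_phi_rel A ideal_X"
proof -
  have xc: "x \<in> carrier_mat (N-1) (N-1)" using x GS_carr by blast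
  have canc: "\<And>C. C \<in> carrier_mat (N-1) (N-1) \<Longrightarrow> xi * (x * C) = C"
    using mcancel[OF xi(1) xc _ xi(3)] by blast
  from y[unfolded Erel_eq] show ?thesis unfolding Erel_eq
  proof induct
    case one
    have "x * 1\<^sub>m (N-1) * xi = 1\<^sub>m (N-1)" using xc xi by (simp add: sqsimps)
    then show ?case using gen_grp.one by metis
  next
    case (left y r)
    have yc: "y \<in> carrier_mat (N-1) (N-1)" using gen_grp_carrier[OF RG_carr left(1)] .
    have rc: "r \<in> carrier_mat (N-1) (N-1)" using RG_carr left(3) by blast
    have "x * (r * y) * xi = (x * r * xi) * (x * y * xi)"
      using xc xi yc rc by (simp add: sqsimps sq_mult_carr canc)
    then show ?case using gen_grp.left[OF left(2) conj_RG[OF x xi left(3)]] by simp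
  next
    case (left_inv y r t)
    have yc: "y \<in> carrier_mat (N-1) (N-1)" using gen_grp_carrier[OF RG_carr left_inv(1)] .
    have rc: "r \<in> carrier_mat (N-1) (N-1)" using RG_carr left_inv(3) by blast
    have tc: "t \<in> carrier_mat (N-1) (N-1)" by fact
    have rtc: "r * (t * C) = C" if "C \<in> carrier_mat (N-1) (N-1)" for C
      using mcancel[OF rc tc that left_inv(5)] .
    have trc: "t * (r * C) = C" if "C \<in> carrier_mat (N-1) (N-1)" for C
      using mcancel[OF tc rc that left_inv(6)] .
    have "x * (t * y) * xi = (x * t * xi) * (x * y * xi)"
      using xc xi yc tc by (simp add: sqsimps sq_mult_carr canc)
    moreover have "(x * r * xi) * (x * t * xi) = 1\<^sub>m (N-1)"
      using xc xi rc tc by (simp add: sqsimps sq_mult_carr canc rtc)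
    moreover have "(x * t * xi) * (x * r * xi) = 1\<^sub>m (N-1)"
      using xc xi rc tc by (simp add: sqsimps sq_mult_carr canc trc)
    moreover have "x * t * xi \<in> carrier_mat (N-1) (N-1)" using xc xi tc by (simp add: sq_mult_carr)
    ultimately show ?case using gen_grp.left_inv[OF left_inv(2) conj_RG[OF x xi left_inv(3)]] by simp
  qed
qed

lemma split_v:
  assumes v: "v \<in> carrier_mat 1 (N-1)"
  shows "map_mat c0 v \<in> carrier_mat 1 (N-1)" "v - map_mat c0 v \<in> rowvecs A ideal_X"
    "map_mat c0 v + (v - map_mat c0 v) = v"
proof -
  have d: "dim_row v = 1" "dim_col v = N-1" using v by auto
  show "map_mat c0 v \<in> carrier_mat 1 (N-1)" using v by simp
  show "map_mat c0 v + (v - map_mat c0 v) = v" by (rule eq_matI) (auto simp: d)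
  have "[:0, 1:] dvd (v $$ (0, j) - c0 (v $$ (0, j)))" for j
    using dvd_iff_poly_eq_0[of 0 "v $$ (0, j) - c0 (v $$ (0, j))"] by (simp add: c0_def)
  then show "v - map_mat c0 v \<in> rowvecs A ideal_X"
    unfolding rowvecs_def ideal_X_def using v by (auto simp: d)
qed

lemma decomp:
  assumes s: "s \<in> GS UNIV"
  shows "\<exists>s0 hh s0i. s0 \<in> GS UNIV \<and> hh \<in> GS ideal_X \<and> s0i \<in> carrier_mat (N-1) (N-1) \<and>
     s0 * s0i = 1\<^sub>m (N-1) \<and> s0i * s0 = 1\<^sub>m (N-1) \<and> s = s0 * hh \<and> map_mat c0 s = s0"
proof -
  from s consider v where "v \<in> carrier_mat 1 (N-1)" "s = alpha_phi A v"
    | v where "v \<in> carrier_mat 1 (N-1)" "s = beta_phi A v"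
    unfolding GS_def rowvecs_UNIV by blast
  then show ?thesis
  proof cases
    case 1
    note sp = split_v[OF 1(1)]
    define v0 where "v0 = map_mat c0 v"
    have v0: "v0 \<in> carrier_mat 1 (N-1)" "- v0 \<in> carrier_mat 1 (N-1)" using sp(1) unfolding v0_def by auto
    have v1: "v - v0 \<in> carrier_mat 1 (N-1)" using sp(2) rowvecs_sub unfolding v0_def by blast
    have "s = alpha_phi A v0 * alpha_phi A (v - v0)"
      using alpha_add[OF v0(1) v1] sp(3) 1(2) unfolding v0_def by simp
    moreover have "map_mat c0 s = alpha_phi A v0" using L0_alpha[OF 1(1)] 1(2) unfolding v0_def by simp
    moreover have "alpha_phi A v0 \<in> GS UNIV" using v0 unfolding GS_def rowvecs_UNIV by blast
    moreover have "alpha_phi A (v - v0) \<in> GS ideal_X" using sp(2) unfolding GS_def v0_def by blast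
    ultimately show ?thesis using alpha_inv[OF v0(1)] alpha_carr[OF v0(2)] by blast
  next
    case 2
    note sp = split_v[OF 2(1)]
    define v0 where "v0 = map_mat c0 v"
    have v0: "v0 \<in> carrier_mat 1 (N-1)" "- v0 \<in> carrier_mat 1 (N-1)" using sp(1) unfolding v0_def by auto
    have v1: "v - v0 \<in> carrier_mat 1 (N-1)" using sp(2) rowvecs_sub unfolding v0_def by blast
    have "s = beta_phi A v0 * beta_phi A (v - v0)"
      using beta_add[OF v0(1) v1] sp(3) 2(2) unfolding v0_def by simp
    moreover have "map_mat c0 s = beta_phi A v0" using L0_beta[OF 2(1)] 2(2) unfolding v0_def by simp
    moreover have "beta_phi A v0 \<in> GS UNIV" using v0 unfolding GS_def rowvecs_UNIV by blast
    moreover have "beta_phi A (v - v0) \<in> GS ideal_X" using sp(2) unfolding GS_def v0_def by blast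
    ultimately show ?thesis using beta_inv[OF v0(1)] beta_carr[OF v0(2)] by blast
  qed
qed

lemma step:
  assumes s: "s \<in> GS UNIV" and g: "g \<in> carrier_mat (N-1) (N-1)" and k: "k \<in> E_phi_rel A ideal_X"
    and gk: "g = k * map_mat c0 g"
  shows "\<exists>k'\<in>E_phi_rel A ideal_X. s * g = k' * map_mat c0 (s * g)"
proof -
  obtain s0 hh s0i where d: "s0 \<in> GS UNIV" "hh \<in> GS ideal_X" "s0i \<in> carrier_mat (N-1) (N-1)"
    "s0 * s0i = 1\<^sub>m (N-1)" "s0i * s0 = 1\<^sub>m (N-1)" "s = s0 * hh" "map_mat c0 s = s0"
    using decomp[OF s] by blast
  have s0c: "s0 \<in> carrier_mat (N-1) (N-1)" using d(1) GS_carr by blast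
  have hc: "hh \<in> carrier_mat (N-1) (N-1)" using d(2) GS_carr by blast
  have sc: "s \<in> carrier_mat (N-1) (N-1)" using s GS_carr by blast
  have kc: "k \<in> carrier_mat (N-1) (N-1)" using Erel_carr[OF k] .
  define G0 where "G0 = map_mat c0 g"
  have G0c: "G0 \<in> carrier_mat (N-1) (N-1)" using g unfolding G0_def by simp
  have canc: "\<And>C. C \<in> carrier_mat (N-1) (N-1) \<Longrightarrow> s0i * (s0 * C) = C"
    using mcancel[OF d(3) s0c _ d(5)] by blast
  have m1: "s0 * hh * s0i \<in> E_phi_rel A ideal_X"
  proof -
    have "s0 * hh * s0i \<in> RG" unfolding RG_def using E_gen[OF d(1)] E_gen[OF d(2)] d(3-5) by blast
    then show ?thesis unfolding Erel_eq using gen_grp_gen[OF RG_carr] by blast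
  qed
  have m2: "s0 * k * s0i \<in> E_phi_rel A ideal_X" using conj_Erel[OF d(1) d(3-5) k] .
  have k': "(s0 * hh * s0i) * (s0 * k * s0i) \<in> E_phi_rel A ideal_X" using Erel_mult[OF m1 m2] .
  have L: "map_mat c0 (s * g) = s0 * G0" using L0_mult[OF sc g] d(7) unfolding G0_def by simp
  have "s * g = s0 * hh * (k * G0)" using d(6) gk unfolding G0_def by simp
  also have "\<dots> = (s0 * hh * s0i) * (s0 * k * s0i) * (s0 * G0)"
    using s0c hc kc G0c d(3) by (simp add: sqsimps sq_mult_carr canc)
  finally show ?thesis using k' L by metis
qed

lemma main_claim:
  assumes g: "g \<in> E_phi A UNIV"
  shows "\<exists>k\<in>E_phi_rel A ideal_X. g = k * map_mat c0 g"
  using g[unfolded E_phi_eq]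
proof induct
  case one
  have "1\<^sub>m (N-1) \<in> E_phi_rel A ideal_X" unfolding Erel_eq by (rule gen_grp.one)
  moreover have "(1\<^sub>m (N-1) :: 'a poly mat) = 1\<^sub>m (N-1) * map_mat c0 (1\<^sub>m (N-1))"
    by (simp add: c0.mat_hom_one)
  ultimately show ?case by blast
next
  case (left g s)
  have gc: "g \<in> carrier_mat (N-1) (N-1)" using gen_grp_carrier[OF GS_carr left(1)] .
  from left(2) obtain k where "k \<in> E_phi_rel A ideal_X" "g = k * map_mat c0 g" by blast
  then show ?case using step[OF left(3) gc] by blast
next
  case (left_inv g s t)
  have gc: "g \<in> carrier_mat (N-1) (N-1)" using gen_grp_carrier[OF GS_carr left_inv(1)] .
  have tG: "t \<in> GS UNIV" using GS_inv_in[OF left_inv(3-6)] .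
  from left_inv(2) obtain k where "k \<in> E_phi_rel A ideal_X" "g = k * map_mat c0 g" by blast
  then show ?case using step[OF tG gc] by blast
qed

lemma ev_iff:
  fixes x :: "'a poly mat"
  assumes x: "x \<in> carrier_mat k k"
  shows "map_mat (\<lambda>p. poly p 0) x = 1\<^sub>m k \<longleftrightarrow> map_mat c0 x = 1\<^sub>m k"
proof
  assume H: "map_mat (\<lambda>p. poly p 0) x = 1\<^sub>m k"
  show "map_mat c0 x = 1\<^sub>m k"
  proof (rule eq_matI)
    fix i j assume "i < dim_row (1\<^sub>m k :: 'a poly mat)" "j < dim_col (1\<^sub>m k :: 'a poly mat)"
    then have ij: "i < k" "j < k" by auto
    have "poly (x $$ (i,j)) 0 = (1\<^sub>m k :: 'a mat) $$ (i,j)"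
      using arg_cong[OF H, of "\<lambda>M. M $$ (i,j)"] ij x by auto
    then show "map_mat c0 x $$ (i,j) = 1\<^sub>m k $$ (i,j)" using ij x by (auto simp: c0_def one_pCons)
  qed (use x in auto)
next
  assume H: "map_mat c0 x = 1\<^sub>m k"
  show "map_mat (\<lambda>p. poly p 0) x = 1\<^sub>m k"
  proof (rule eq_matI)
    fix i j assume "i < dim_row (1\<^sub>m k :: 'a mat)" "j < dim_col (1\<^sub>m k :: 'a mat)"
    then have ij: "i < k" "j < k" by auto
    have "[:poly (x $$ (i,j)) 0:] = (1\<^sub>m k :: 'a poly mat) $$ (i,j)"
      using arg_cong[OF H, of "\<lambda>M. M $$ (i,j)"] ij x by (auto simp: c0_def)
    then show "map_mat (\<lambda>p. poly p 0) x $$ (i,j) = 1\<^sub>m k $$ (i,j)" using ij x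
      by (auto simp: one_pCons split: if_splits)
  qed (use x in auto)
qed

theorem main: "E_phi_rel A ideal_X = E_phi A UNIV \<inter> GL_X (N-1)"
proof
  show "E_phi_rel A ideal_X \<subseteq> E_phi A UNIV \<inter> GL_X (N-1)"
  proof
    fix x assume x: "x \<in> E_phi_rel A ideal_X"
    have xE: "x \<in> E_phi A UNIV" using Erel_ES x by blast
    have xc: "x \<in> carrier_mat (N-1) (N-1)" using E_carr[OF xE] .
    obtain x' where x': "x' \<in> E_phi A UNIV" "x * x' = 1\<^sub>m (N-1)" "x' * x = 1\<^sub>m (N-1)" using E_inv[OF xE] by blast
    have x'c: "x' \<in> carrier_mat (N-1) (N-1)" using E_carr[OF x'(1)] .
    have inv: "invertible_mat x" unfolding invertible_mat_def inverts_mat_def square_mat.simps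
      using xc x'c x' by auto
    have "map_mat (\<lambda>p. poly p 0) x = 1\<^sub>m (N-1)" using ev_iff[OF xc] L0_Erel[OF x] by simp
    then show "x \<in> E_phi A UNIV \<inter> GL_X (N-1)" unfolding GL_X_def using xE xc inv by blast
  qed
next
  show "E_phi A UNIV \<inter> GL_X (N-1) \<subseteq> E_phi_rel A ideal_X"
  proof
    fix x assume x: "x \<in> E_phi A UNIV \<inter> GL_X (N-1)"
    have xc: "x \<in> carrier_mat (N-1) (N-1)" using x unfolding GL_X_def by blast
    have "map_mat c0 x = 1\<^sub>m (N-1)" using x ev_iff[OF xc] unfolding GL_X_def by blast
    moreover obtain k where k: "k \<in> E_phi_rel A ideal_X" "x = k * map_mat c0 x" using main_claim x by blast
    ultimately have "x = k" using Erel_carr[OF k(1)] by simp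
    then show "x \<in> E_phi_rel A ideal_X" using k by simp
  qed
qed

end

theorem lemma3p8:
  fixes \<phi> :: "'a::comm_ring_1 mat" and n :: nat
  assumes "n \<ge> 1"
    and "\<phi> \<in> carrier_mat (2*n) (2*n)"
    and "alternating_mat \<phi>"
    and "invertible_mat \<phi>"
  shows "E_phi_rel (map_mat (\<lambda>a. [:a:]) \<phi>) ideal_X
         = E_phi (map_mat (\<lambda>a. [:a:]) \<phi>) UNIV \<inter> GL_X (2*n - 1)"
proof -
  interpret k: comm_ring_hom "\<lambda>a::'a. [:a:]"
    by unfold_locales (auto simp: one_pCons)
  define \<psi> where "\<psi> = map_mat (\<lambda>a. [:a:]) \<phi>"
  have dphi: "dim_row \<phi> = 2*n" "dim_col \<phi> = 2*n" using assms(2) by auto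
  have \<psi>c: "\<psi> \<in> carrier_mat (2*n) (2*n)" using assms(2) unfolding \<psi>_def by simp
  have alt: "alternating_mat \<psi>"
  proof -
    from assms(3) obtain \<nu> where nu: "\<nu> \<in> carrier_mat (dim_row \<phi>) (dim_row \<phi>)" "\<phi> = \<nu> - transpose_mat \<nu>"
      unfolding alternating_mat_def by blast
    have nd: "dim_row \<nu> = 2*n" "dim_col \<nu> = 2*n" using nu(1) dphi by auto
    have "\<psi> = map_mat (\<lambda>a. [:a:]) \<nu> - transpose_mat (map_mat (\<lambda>a. [:a:]) \<nu>)"
    proof (rule eq_matI)
      fix i j assume "i < dim_row (map_mat (\<lambda>a. [:a:]) \<nu> - transpose_mat (map_mat (\<lambda>a. [:a:]) \<nu>))"
        "j < dim_col (map_mat (\<lambda>a. [:a:]) \<nu> - transpose_mat (map_mat (\<lambda>a. [:a:]) \<nu>))"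
      then have ij: "i < 2*n" "j < 2*n" by (simp_all add: nd)
      have e: "\<phi> $$ (i,j) = \<nu> $$ (i,j) - \<nu> $$ (j,i)" using ij nd by (subst nu(2)) simp
      show "\<psi> $$ (i,j) = (map_mat (\<lambda>a. [:a:]) \<nu> - transpose_mat (map_mat (\<lambda>a. [:a:]) \<nu>)) $$ (i,j)"
        using ij nd dphi unfolding \<psi>_def by (simp add: e)
    qed (simp_all add: \<psi>_def nd dphi)
    moreover have "map_mat (\<lambda>a. [:a:]) \<nu> \<in> carrier_mat (dim_row \<psi>) (dim_row \<psi>)"
      using nd \<psi>c by auto
    ultimately show ?thesis unfolding alternating_mat_def by blast
  qed
  have inv: "invertible_mat \<psi>"
  proof -
    from assms(4) obtain B0 where B0: "\<phi> * B0 = 1\<^sub>m (2*n)" "B0 * \<phi> = 1\<^sub>m (dim_row B0)"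
      unfolding invertible_mat_def inverts_mat_def dphi by auto
    have "dim_col B0 = 2*n" using arg_cong[OF B0(1), of dim_col] by simp
    moreover have "dim_row B0 = 2*n" using arg_cong[OF B0(2), of dim_col] dphi by simp
    ultimately have B0c: "B0 \<in> carrier_mat (2*n) (2*n)" by auto
    have "\<psi> * map_mat (\<lambda>a. [:a:]) B0 = 1\<^sub>m (2*n)"
      unfolding \<psi>_def using k.mat_hom_mult[OF assms(2) B0c, symmetric] B0(1) k.mat_hom_one by simp
    moreover have "map_mat (\<lambda>a. [:a:]) B0 * \<psi> = 1\<^sub>m (2*n)"
      unfolding \<psi>_def using k.mat_hom_mult[OF B0c assms(2), symmetric] B0(2) B0c k.mat_hom_one by simp
    ultimately show ?thesis unfolding invertible_mat_def inverts_mat_def square_mat.simps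
      using \<psi>c B0c by auto
  qed
  have const: "c0 (\<psi> $$ (i,j)) = \<psi> $$ (i,j)" if "i < 2*n" "j < 2*n" for i j
    using that dphi unfolding \<psi>_def by (simp add: c0_def)
  interpret P: polysetup \<psi> "2*n"
    by unfold_locales (use \<psi>c alt inv const assms(1) in auto)
  show ?thesis using P.main unfolding \<psi>_def .
qed

end
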